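(* Let $\mathcal{F}=(M,\{A^u\}_{u\in Q})$ be an FDFA and $\overline{B}$ the Büchi automaton constructed from $\mathcal{F}$ as in the context. For every $\omega$-word $w\in UP(L(\overline{B}))$ there exist a decomposition $(u,v)$ of $w$ (i.e., $u\in\Sigma^*$, $v\in\Sigma^+$, $w=uv^\omega$) and $n\geq1$ such that $v=v_1v_2\cdots v_n$ and for all $i\in\{1,\dots,n\}$, $v_i\in L(A^{M(u)})$ and $M(uv_i)=M(u)$.
   Context: $\Sigma$ is a finite alphabet. For a complete DFA $A$ and finite word $w$, $A(w)$ is the state reached from the initial state on $w$. An FDFA is $\mathcal{F}=(M,\{A^q\}_{q\in Q})$ with $M=(\Sigma,Q,q_0,\delta)$ a complete DFA without accepting states and each $A^q=(\Sigma,Q_q,s_q,F_q,\delta_q)$ a complete DFA. For an $\omega$-language $L'$, $UP(L')$ is the set of ultimately periodic words in $L'$. Construction of $\overline{B}$: for a DFA $D$ and states $s,t$, $D^s_t$ is $D$ with initial state $s$ and accepting set $\{t\}$. For $u\in Q$, $v\in F_u$ let $\overline{P}_{(u,v)}=M^u_u\times(A^u)^{s_u}_v$ (synchronous product, single accepting state $f_P$, initial state $s_P$, states $Q_P$, transitions $\delta_P$). From it form the Büchi automaton with $\epsilon$-transitions $(\Sigma,Q_P\cup\{f\},s_P,\{f\},\delta_P\cup\{(f,\epsilon,s_P),(f_P,\epsilon,f)\})$ with $f$ fresh. $\overline{B}$ has state set $Q$ plus disjoint copies of these automata for all $u\in Q$, $v\in F_u$; initial state $q_0$; accepting states the fresh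 states $f$; transitions $\delta$, those of the components, and $\epsilon$-transitions from $u\in Q$ to the initial state of the component for $(u,v)$. An infinite word is accepted if some run (with $\epsilon$-moves) reading it visits accepting states infinitely often. *)

theory Defs
  imports Main "HOL-Library.Omega_Words_Fun"
begin

definition drun :: "('q \<Rightarrow> 'a \<Rightarrow> 'q) \<Rightarrow> 'q \<Rightarrow> 'a list \<Rightarrow> 'q" where
  "drun d p xs = foldl d p xs"

definition complete_dfa :: "'a set \<Rightarrow> 'q set \<Rightarrow> 'q \<Rightarrow> ('q \<Rightarrow> 'a \<Rightarrow> 'q) \<Rightarrow> bool" where
  "complete_dfa Sig Q q0 d \<longleftrightarrow> finite Q \<and> q0 \<in> Q \<and> (\<forall>p\<in>Q. \<forall>a\<in>Sig. d p a \<in> Q)"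

(* FDFA F = (M, {A^q}) with M = (Sig, Q, q0, d) and
   A^q = (Sig, QA q, s q, Fa q, dA q); Sig a finite alphabet *)
definition fdfa ::
  "'a set \<Rightarrow> 'q set \<Rightarrow> 'q \<Rightarrow> ('q \<Rightarrow> 'a \<Rightarrow> 'q)
   \<Rightarrow> ('q \<Rightarrow> 's set) \<Rightarrow> ('q \<Rightarrow> 's) \<Rightarrow> ('q \<Rightarrow> 's set) \<Rightarrow> ('q \<Rightarrow> 's \<Rightarrow> 'a \<Rightarrow> 's) \<Rightarrow> bool" where
  "fdfa Sig Q q0 d QA s Fa dA \<longleftrightarrow> finite Sig \<and> complete_dfa Sig Q q0 d \<and>
     (\<forall>q\<in>Q. complete_dfa Sig (QA q) (s q) (dA q) \<and> Fa q \<subseteq> QA q)"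

definition acc_A :: "'a set \<Rightarrow> ('q \<Rightarrow> 's) \<Rightarrow> ('q \<Rightarrow> 's set) \<Rightarrow> ('q \<Rightarrow> 's \<Rightarrow> 'a \<Rightarrow> 's) \<Rightarrow> 'q \<Rightarrow> 'a list set" where
  "acc_A Sig s Fa dA q = {x. set x \<subseteq> Sig \<and> drun (dA q) (s q) x \<in> Fa q}"

(* States of the Buchi automaton Bbar:
   Top p       : state p of M
   Inner u t p a : state (p,a) of the product P_(u,t) = M^u_u x (A^u)^{s_u}_t (copy for (u,t))
   Fresh u t   : the fresh accepting state f of the copy for (u,t) *)
datatype ('q, 's) bstate = Top 'q | Inner 'q 's 'q 's | Fresh 'q 's

(* Transitions of Bbar; None is an epsilon-transition *)
inductive bstep ::
  "'a set \<Rightarrow> 'q set \<Rightarrow> ('q \<Rightarrow> 'a \<Rightarrow> 'q)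
   \<Rightarrow> ('q \<Rightarrow> 's set) \<Rightarrow> ('q \<Rightarrow> 's) \<Rightarrow> ('q \<Rightarrow> 's set) \<Rightarrow> ('q \<Rightarrow> 's \<Rightarrow> 'a \<Rightarrow> 's)
   \<Rightarrow> ('q, 's) bstate \<Rightarrow> 'a option \<Rightarrow> ('q, 's) bstate \<Rightarrow> bool"
  for Sig Q d QA s Fa dA where
  top: "p \<in> Q \<Longrightarrow> a \<in> Sig \<Longrightarrow> bstep Sig Q d QA s Fa dA (Top p) (Some a) (Top (d p a))"
| enter: "u \<in> Q \<Longrightarrow> t \<in> Fa u \<Longrightarrow> bstep Sig Q d QA s Fa dA (Top u) None (Inner u t u (s u))"
| inner: "u \<in> Q \<Longrightarrow> t \<in> Fa u \<Longrightarrow> p \<in> Q \<Longrightarrow> b \<in> QA u \<Longrightarrow> a \<in> Sig \<Longrightarrow>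
           bstep Sig Q d QA s Fa dA (Inner u t p b) (Some a) (Inner u t (d p a) (dA u b a))"
| to_fresh: "u \<in> Q \<Longrightarrow> t \<in> Fa u \<Longrightarrow> bstep Sig Q d QA s Fa dA (Inner u t u t) None (Fresh u t)"
| from_fresh: "u \<in> Q \<Longrightarrow> t \<in> Fa u \<Longrightarrow> bstep Sig Q d QA s Fa dA (Fresh u t) None (Inner u t u (s u))"

definition consumed :: "(nat \<Rightarrow> 'a option) \<Rightarrow> nat \<Rightarrow> nat" where
  "consumed l i = length (filter (\<lambda>x. x \<noteq> None) (map l [0..<i]))"

definition lang_Bbar ::
  "'a set \<Rightarrow> 'q set \<Rightarrow> 'q \<Rightarrow> ('q \<Rightarrow> 'a \<Rightarrow> 'q)
   \<Rightarrow> ('q \<Rightarrow> 's set) \<Rightarrow> ('q \<Rightarrow> 's) \<Rightarrow> ('q \<Rightarrow> 's set) \<Rightarrow> ('q \<Rightarrow> 's \<Rightarrow> 'a \<Rightarrow> 's) \<Rightarrow> 'a word set" where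
  "lang_Bbar Sig Q q0 d QA s Fa dA = {w. \<exists>r l.
      r 0 = Top q0 \<and>
      (\<forall>i. bstep Sig Q d QA s Fa dA (r i) (l i) (r (Suc i))) \<and>
      (\<forall>i a. l i = Some a \<longrightarrow> w (consumed l i) = a) \<and>
      (\<forall>n. \<exists>i. n \<le> consumed l i) \<and>
      (\<exists>\<^sub>\<infinity>i. \<exists>u t. r i = Fresh u t)}"

definition UP :: "'a word set \<Rightarrow> 'a word set" where
  "UP L = {w \<in> L. \<exists>u v. v \<noteq> [] \<and> w = u \<frown> v\<^sup>\<omega>}"

end

theory Submission
  imports Defs
begin

definition sub :: "'a word \<Rightarrow> nat \<Rightarrow> nat \<Rightarrow> 'a list" where
  "sub w a b = map w [a..<b]"

lemma sub_snoc: "a \<le> b \<Longrightarrow> sub w a (Suc b) = sub w a b @ [w b]"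
  by (simp add: sub_def)

lemma sub_same[simp]: "sub w a a = []"
  by (simp add: sub_def)

lemma sub_app: "a \<le> b \<Longrightarrow> b \<le> c \<Longrightarrow> sub w a c = sub w a b @ sub w b c"
  unfolding sub_def by (metis map_append upt_add_eq_append le_add_diff_inverse)

lemma drun_snoc: "drun d p (xs @ [a]) = d (drun d p xs) a"
  by (simp add: drun_def)

lemma drun_app: "drun d p (xs @ ys) = drun d (drun d p xs) ys"
  by (simp add: drun_def)

lemma drun_Nil[simp]: "drun d p [] = p"
  by (simp add: drun_def)

lemma consumed_Suc: "consumed l (Suc i) = consumed l i + (if l i = None then 0 else 1)"
  by (simp add: consumed_def)

lemma consumed_mono: "i \<le> j \<Longrightarrow> consumed l i \<le> consumed l j"
proof (induction j rule: dec_induct)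
  case base then show ?case by simp
next
  case (step n) then show ?case by (simp add: consumed_Suc)
qed

definition good where
  "good Sig d s Fa dA u x \<longleftrightarrow> (\<exists>vs. x = concat vs \<and>
     (\<forall>y\<in>set vs. y \<in> acc_A Sig s Fa dA u \<and> drun d u y = u))"

lemma good_Nil: "good Sig d s Fa dA u []"
  unfolding good_def by (rule exI[of _ "[]"]) simp

lemma good_snoc: "good Sig d s Fa dA u x \<Longrightarrow> y \<in> acc_A Sig s Fa dA u \<Longrightarrow> drun d u y = u
   \<Longrightarrow> good Sig d s Fa dA u (x @ y)"
proof -
  assume g: "good Sig d s Fa dA u x" and a: "y \<in> acc_A Sig s Fa dA u" and b: "drun d u y = u"
  from g obtain vs where vs: "x = concat vs" "\<forall>z\<in>set vs. z \<in> acc_A Sig s Fa dA u \<and> drun d u z = u"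
    unfolding good_def by blast
  have "x @ y = concat (vs @ [y])" using vs by simp
  moreover have "\<forall>z\<in>set (vs @ [y]). z \<in> acc_A Sig s Fa dA u \<and> drun d u z = u"
    using vs a b by auto
  ultimately show ?thesis unfolding good_def by blast
qed

lemma drun_concat: "\<forall>y\<in>set vs. drun d u y = u \<Longrightarrow> drun d u (concat vs) = u"
proof (induction vs)
  case Nil then show ?case by simp
next
  case (Cons a vs)
  have "drun d u a = u" using Cons.prems by simp
  moreover have "drun d u (concat vs) = u" using Cons by simp
  ultimately show ?case by (simp only: concat.simps drun_app)
qed

lemma good_drun: "good Sig d s Fa dA u x \<Longrightarrow> drun d u x = u"
proof -
  assume "good Sig d s Fa dA u x"
  then obtain vs where vs: "x = concat vs" "\<forall>z\<in>set vs. z \<in> acc_A Sig s Fa dA u \<and> drun d u z = u"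
    unfolding good_def by blast
  have "\<forall>z\<in>set vs. drun d u z = u" using vs(2) by blast
  then show ?thesis using vs(1) drun_concat by metis
qed

lemma sig_prefix:
  assumes run: "\<And>i. bstep Sig Q d QA s Fa dA (r i) (l i) (r (Suc i))"
  and rd: "\<And>i a. l i = Some a \<Longrightarrow> w (consumed l i) = a"
  shows "set (sub w 0 (consumed l i)) \<subseteq> Sig"
proof (induction i)
  case 0 then show ?case by (simp add: consumed_def)
next
  case (Suc i)
  show ?case
  proof (cases "l i")
    case None then show ?thesis using Suc by (simp add: consumed_Suc)
  next
    case (Some a)
    have "a \<in> Sig" using run[of i] Some by cases auto
    then show ?thesis using Suc Some rd[of i a] by (simp add: consumed_Suc sub_snoc)
  qed
qed

lemma all_sig:
  assumes run: "\<And>i. bstep Sig Q d QA s Fa dA (r i) (l i) (r (Suc i))"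
  and rd: "\<And>i a. l i = Some a \<Longrightarrow> w (consumed l i) = a"
  and cons: "\<forall>n. \<exists>i. n \<le> consumed l i"
  shows "w n \<in> Sig"
proof -
  obtain i where "Suc n \<le> consumed l i" using cons by blast
  then have "w n \<in> set (sub w 0 (consumed l i))" by (simp add: sub_def)
  moreover have "set (sub w 0 (consumed l i)) \<subseteq> Sig"
    by (rule sig_prefix[of Sig Q d QA s Fa dA r l w, OF run rd])
  ultimately show ?thesis by blast
qed

lemma inv0:
  assumes run: "\<And>i. bstep Sig Q d QA s Fa dA (r i) (l i) (r (Suc i))"
  and rd: "\<And>i a. l i = Some a \<Longrightarrow> w (consumed l i) = a"
  and sig: "\<And>n. w n \<in> Sig"
  and r0: "r 0 = Top q0"
  shows "(\<forall>p. r i = Top p \<longrightarrow> p = drun d q0 (sub w 0 (consumed l i))) \<and>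
   (\<forall>u t p b. r i = Inner u t p b \<longrightarrow> (\<exists>k k'. k \<le> k' \<and> k' \<le> consumed l i \<and>
       drun d q0 (sub w 0 k) = u \<and> good Sig d s Fa dA u (sub w k k') \<and>
       drun d u (sub w k' (consumed l i)) = p \<and> drun (dA u) (s u) (sub w k' (consumed l i)) = b)) \<and>
   (\<forall>u t. r i = Fresh u t \<longrightarrow> (\<exists>k. k \<le> consumed l i \<and> drun d q0 (sub w 0 k) = u \<and>
       good Sig d s Fa dA u (sub w k (consumed l i))))"
proof (induction i)
  case 0 then show ?case using r0 by (simp add: consumed_def)
next
  case (Suc i)
  let ?c = "consumed l i"
  from run[of i] show ?case
  proof cases
    case (top p a)
    have "consumed l (Suc i) = Suc ?c" using top by (simp add: consumed_Suc)
    moreover have "w ?c = a" using rd top by simp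
    ultimately show ?thesis using Suc top by (simp add: sub_snoc drun_snoc)
  next
    case (enter u t)
    have c: "consumed l (Suc i) = ?c" using enter by (simp add: consumed_Suc)
    show ?thesis using Suc enter c
      by (auto intro!: exI[of _ ?c] simp: good_Nil)
  next
    case (inner u t p b a)
    have c: "consumed l (Suc i) = Suc ?c" using inner by (simp add: consumed_Suc)
    have wa: "w ?c = a" using rd inner by simp
    from Suc inner obtain k k' where kk: "k \<le> k'" "k' \<le> ?c" "drun d q0 (sub w 0 k) = u"
       "good Sig d s Fa dA u (sub w k k')" "drun d u (sub w k' ?c) = p"
       "drun (dA u) (s u) (sub w k' ?c) = b" by auto
    have e: "sub w k' (consumed l (Suc i)) = sub w k' ?c @ [a]"
      using c kk(2) wa sub_snoc by metis
    have "k' \<le> consumed l (Suc i) \<and> drun d u (sub w k' (consumed l (Suc i))) = d p a \<and>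
       drun (dA u) (s u) (sub w k' (consumed l (Suc i))) = dA u b a"
      using e kk c by (simp add: drun_snoc)
    then have "\<exists>k k'. k \<le> k' \<and> k' \<le> consumed l (Suc i) \<and>
       drun d q0 (sub w 0 k) = u \<and> good Sig d s Fa dA u (sub w k k') \<and>
       drun d u (sub w k' (consumed l (Suc i))) = d p a \<and>
       drun (dA u) (s u) (sub w k' (consumed l (Suc i))) = dA u b a"
      using kk by blast
    then show ?thesis using inner by simp
  next
    case (to_fresh u t)
    have c: "consumed l (Suc i) = ?c" using to_fresh by (simp add: consumed_Suc)
    from Suc to_fresh obtain k k' where kk: "k \<le> k'" "k' \<le> ?c" "drun d q0 (sub w 0 k) = u"
       "good Sig d s Fa dA u (sub w k k')" "drun d u (sub w k' ?c) = u"
       "drun (dA u) (s u) (sub w k' ?c) = t" by auto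
    have acc: "sub w k' ?c \<in> acc_A Sig s Fa dA u"
      using kk to_fresh sig by (auto simp: acc_A_def sub_def)
    have "good Sig d s Fa dA u (sub w k ?c)"
      using good_snoc[OF kk(4) acc kk(5)] sub_app[where w=w, OF kk(1) kk(2)] by simp
    then have "\<exists>k. k \<le> ?c \<and> drun d q0 (sub w 0 k) = u \<and> good Sig d s Fa dA u (sub w k ?c)"
      using kk le_trans by blast
    then show ?thesis using to_fresh c by simp
  next
    case (from_fresh u t)
    have c: "consumed l (Suc i) = ?c" using from_fresh by (simp add: consumed_Suc)
    from Suc from_fresh obtain k where kk: "k \<le> ?c" "drun d q0 (sub w 0 k) = u"
       "good Sig d s Fa dA u (sub w k ?c)" by auto
    have "\<exists>k k'. k \<le> k' \<and> k' \<le> consumed l (Suc i) \<and>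
       drun d q0 (sub w 0 k) = u \<and> good Sig d s Fa dA u (sub w k k') \<and>
       drun d u (sub w k' (consumed l (Suc i))) = u \<and>
       drun (dA u) (s u) (sub w k' (consumed l (Suc i))) = s u"
      using c kk by (intro exI[of _ k] exI[of _ ?c]) simp
    then show ?thesis using from_fresh by simp
  qed
qed

lemma inv_rel:
  assumes run: "\<And>i. bstep Sig Q d QA s Fa dA (r i) (l i) (r (Suc i))"
  and rd: "\<And>i a. l i = Some a \<Longrightarrow> w (consumed l i) = a"
  and sig: "\<And>n. w n \<in> Sig"
  and ri0: "r i0 = Fresh u t"
  and le: "i0 \<le> i"
  shows "(\<forall>p. r i \<noteq> Top p) \<and>
   (\<forall>u' t' p b. r i = Inner u' t' p b \<longrightarrow> u' = u \<and> (\<exists>k'. consumed l i0 \<le> k' \<and> k' \<le> consumed l i \<and>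
       good Sig d s Fa dA u (sub w (consumed l i0) k') \<and>
       drun d u (sub w k' (consumed l i)) = p \<and> drun (dA u) (s u) (sub w k' (consumed l i)) = b)) \<and>
   (\<forall>u' t'. r i = Fresh u' t' \<longrightarrow> u' = u \<and> good Sig d s Fa dA u (sub w (consumed l i0) (consumed l i)))"
  using le
proof (induction i rule: dec_induct)
  case base then show ?case using ri0 by (simp add: good_Nil)
next
  case (step i)
  let ?c = "consumed l i"
  let ?z = "consumed l i0"
  have c0: "?z \<le> ?c" using consumed_mono step by blast
  from run[of i] show ?case
  proof cases
    case (top p a)
    then show ?thesis using step by simp
  next
    case (enter u t)
    then show ?thesis using step by simp
  next
    case (inner u' t' p b a)
    have c: "consumed l (Suc i) = Suc ?c" using inner by (simp add: consumed_Suc)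
    have wa: "w ?c = a" using rd inner by simp
    from step.IH inner have "u' = u \<and> (\<exists>k'. ?z \<le> k' \<and> k' \<le> ?c \<and>
       good Sig d s Fa dA u (sub w ?z k') \<and> drun d u (sub w k' ?c) = p \<and>
       drun (dA u') (s u) (sub w k' ?c) = b)" by simp
    then obtain k' where kk: "?z \<le> k'" "k' \<le> ?c" "u' = u"
       "good Sig d s Fa dA u (sub w ?z k')" "drun d u (sub w k' ?c) = p"
       "drun (dA u) (s u) (sub w k' ?c) = b" by auto
    have e: "sub w k' (consumed l (Suc i)) = sub w k' ?c @ [a]"
      using c kk(2) wa sub_snoc by metis
    have "k' \<le> consumed l (Suc i) \<and> drun d u (sub w k' (consumed l (Suc i))) = d p a \<and>
       drun (dA u) (s u) (sub w k' (consumed l (Suc i))) = dA u b a"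
      using e kk c by (simp add: drun_snoc)
    then have "\<exists>k'. consumed l i0 \<le> k' \<and> k' \<le> consumed l (Suc i) \<and>
       good Sig d s Fa dA u (sub w (consumed l i0) k') \<and>
       drun d u (sub w k' (consumed l (Suc i))) = d p a \<and>
       drun (dA u) (s u) (sub w k' (consumed l (Suc i))) = dA u b a"
      using kk by blast
    then show ?thesis using inner kk by simp
  next
    case (to_fresh u' t')
    have c: "consumed l (Suc i) = ?c" using to_fresh by (simp add: consumed_Suc)
    note X = step.IH[THEN conjunct2, THEN conjunct1, rule_format, OF to_fresh(1)]
    from X obtain k' where kk: "?z \<le> k'" "k' \<le> ?c" "u' = u"
       "good Sig d s Fa dA u (sub w ?z k')" "drun d u (sub w k' ?c) = u"
       "drun (dA u) (s u) (sub w k' ?c) = t'" by blast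
    have acc: "sub w k' ?c \<in> acc_A Sig s Fa dA u"
      using kk to_fresh sig by (auto simp: acc_A_def sub_def)
    have "good Sig d s Fa dA u (sub w ?z ?c)"
      using good_snoc[OF kk(4) acc kk(5)] sub_app[where w=w, OF kk(1) kk(2)] by simp
    then show ?thesis using to_fresh c kk by auto
  next
    case (from_fresh u' t')
    have c: "consumed l (Suc i) = ?c" using from_fresh by (simp add: consumed_Suc)
    from step from_fresh have kk: "u' = u" "good Sig d s Fa dA u (sub w ?z ?c)" by auto
    show ?thesis using from_fresh c kk c0
      by (auto intro!: exI[of _ ?c])
  qed
qed

lemma arith_aux:
  fixes a p q n L :: nat
  assumes "a \<le> p" "p < q" "p \<le> n" "(p - a) mod L = (q - a) mod L"
  shows "(n - a) mod L = (p + (n - p) mod (q - p) - a) mod L"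
proof -
  have "L dvd (q - p)"
  proof -
    have "(q - a) = (p - a) + (q - p)" using assms by simp
    then have "((p - a) + (q - p)) mod L = (p - a) mod L" using assms(4) by simp
    then have "L dvd ((p - a) + (q - p)) - (p - a)"
      using mod_eq_dvd_iff_nat[of "p - a" "(p - a) + (q - p)" L] by simp
    then show ?thesis by simp
  qed
  then obtain c where c: "q - p = L * c" by blast
  define x where "x = (n - p) mod (q - p)"
  define y where "y = (n - p) div (q - p)"
  define z where "z = q - p"
  have e: "x + z * y = n - p" unfolding x_def y_def z_def by (rule mod_mult_div_eq)
  have cz: "z = L * c" using c unfolding z_def .
  have "n - a = (p - a + x) + L * (c * y)" using e cz assms by (simp add: mult.assoc)
  then have "(n - a) mod L = (p - a + x) mod L" by simp
  moreover have "p - a + x = p + x - a" using assms by simp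
  ultimately have "(n - a) mod L = (p + x - a) mod L" by (simp only:)
  then show ?thesis unfolding x_def .
qed

theorem lemma5:
  assumes "fdfa Sig Q q0 d QA s Fa dA"
    and "w \<in> UP (lang_Bbar Sig Q q0 d QA s Fa dA)"
  shows "\<exists>u v. set u \<subseteq> Sig \<and> set v \<subseteq> Sig \<and> v \<noteq> [] \<and> w = u \<frown> v\<^sup>\<omega> \<and>
           (\<exists>vs. length vs \<ge> 1 \<and> v = concat vs \<and>
              (\<forall>x\<in>set vs. x \<in> acc_A Sig s Fa dA (drun d q0 u) \<and>
                          drun d q0 (u @ x) = drun d q0 u))"
proof -
  from assms(2) obtain u' v' r l where v'ne: "v' \<noteq> []" and wuv: "w = u' \<frown> v'\<^sup>\<omega>"
    and r0: "r 0 = Top q0" and run: "\<And>i. bstep Sig Q d QA s Fa dA (r i) (l i) (r (Suc i))"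
    and rd: "\<And>i a. l i = Some a \<Longrightarrow> w (consumed l i) = a"
    and cons: "\<forall>n. \<exists>i. n \<le> consumed l i"
    and inf: "\<exists>\<^sub>\<infinity>i. \<exists>u t. r i = Fresh u t"
    unfolding UP_def lang_Bbar_def by blast
  have sig: "\<And>n. w n \<in> Sig" using all_sig[of Sig Q d QA s Fa dA r l w] run rd cons by blast
  define F where "F = {i. \<exists>u t. r i = Fresh u t}"
  have infF: "infinite F" using inf unfolding F_def INFM_iff_infinite .
  define P where "P = consumed l ` F \<inter> {length u'..}"
  have infP: "infinite P"
    unfolding infinite_nat_iff_unbounded_le
  proof
    fix m
    obtain i where i: "m + length u' \<le> consumed l i" using cons by blast
    obtain j where j: "j \<ge> i" "j \<in> F" using infF unfolding infinite_nat_iff_unbounded_le by blast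
    have "consumed l i \<le> consumed l j" using consumed_mono j by blast
    then show "\<exists>n\<ge>m. n \<in> P" using i j unfolding P_def by (intro exI[of _ "consumed l j"]) auto
  qed
  define f where "f = (\<lambda>x. (x - length u') mod length v')"
  have "f ` P \<subseteq> {..<length v'}" using v'ne unfolding f_def by auto
  then have "finite (f ` P)" using finite_subset by blast
  from pigeonhole_infinite[OF infP this] obtain a0 where a0: "a0 \<in> P"
    "infinite {a\<in>P. f a = f a0}" by blast
  obtain p where p: "p \<in> P" "f p = f a0"
    using a0(2) not_finite_existsD by blast
  obtain q where q: "q \<ge> Suc p" "q \<in> P" "f q = f a0"
    using a0(2) unfolding infinite_nat_iff_unbounded_le by blast
  obtain i where i: "i \<in> F" "p = consumed l i" using p P_def by blast
  obtain j where j: "j \<in> F" "q = consumed l j" using q P_def by blast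
  have ij: "i \<le> j"
  proof (rule ccontr)
    assume "\<not> i \<le> j"
    then have "consumed l j \<le> consumed l i" using consumed_mono[of j i l] by simp
    then show False using i j q by simp
  qed
  obtain U T where rU: "r i = Fresh U T" using i F_def by blast
  obtain U' T' where rU': "r j = Fresh U' T'" using j F_def by blast
  have "\<exists>k. k \<le> p \<and> drun d q0 (sub w 0 k) = U \<and> good Sig d s Fa dA U (sub w k p)"
    using inv0[of Sig Q d QA s Fa dA r l w q0 i] run rd sig r0 rU i by blast
  then obtain k where k: "k \<le> p" "drun d q0 (sub w 0 k) = U" "good Sig d s Fa dA U (sub w k p)"
    by blast
  have MU: "drun d q0 (sub w 0 p) = U"
    using k good_drun[OF k(3)] sub_app[of 0 k p w] by (simp add: drun_app)
  have gv: "good Sig d s Fa dA U (sub w p q)"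
    using inv_rel[of Sig Q d QA s Fa dA r l w i U T j] run rd sig rU ij rU' i j by blast
  then obtain vs where vs: "sub w p q = concat vs"
    "\<forall>y\<in>set vs. y \<in> acc_A Sig s Fa dA U \<and> drun d U y = U"
    unfolding good_def by blast
  have vne: "sub w p q \<noteq> []" using q by (simp add: sub_def)
  have pge: "length u' \<le> p" "length u' \<le> q" using p q P_def by auto
  have fpq: "f p = f q" using p q by simp
  have w_eq: "w x = v' ! ((x - length u') mod length v')" if "length u' \<le> x" for x
  proof -
    have "w x = (u' \<frown> v'\<^sup>\<omega>) x" using wuv by (rule fun_cong)
    also have "\<dots> = v'\<^sup>\<omega> (x - length u')"
      by (rule conc_snd) (use that in linarith)
    also have "\<dots> = v' ! ((x - length u') mod length v')"
      by (rule iter_nth) (use v'ne in blast)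
    finally show ?thesis .
  qed
  have wper: "w = sub w 0 p \<frown> (sub w p q)\<^sup>\<omega>"
  proof
    fix n
    show "w n = (sub w 0 p \<frown> (sub w p q)\<^sup>\<omega>) n"
    proof (cases "n < p")
      case True then show ?thesis by (simp add: sub_def)
    next
      case False
      define m where "m = p + (n - p) mod (q - p)"
      have lq: "length (sub w p q) = q - p" by (simp add: sub_def)
      have "(n - p) mod (q - p) < q - p" using q by simp
      then have "p + (n - p) mod (q - p) < q" by linarith
      then have rhs: "(sub w 0 p \<frown> (sub w p q)\<^sup>\<omega>) n = w m"
        using False vne lq unfolding m_def by (simp add: sub_def)
      have mge: "length u' \<le> m" "length u' \<le> n" using pge False unfolding m_def by auto
      have "(n - length u') mod length v' = (m - length u') mod length v'"
        unfolding m_def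
        by (rule arith_aux) (use pge False q fpq f_def in auto)
      have "w n = v' ! ((n - length u') mod length v')" by (rule w_eq[OF mge(2)])
      moreover have "w m = v' ! ((m - length u') mod length v')" by (rule w_eq[OF mge(1)])
      ultimately have "w n = w m" using \<open>(n - length u') mod length v' = _\<close> by simp
      then show ?thesis using rhs by simp
    qed
  qed
  show ?thesis
  proof (intro exI conjI)
    show "set (sub w 0 p) \<subseteq> Sig" "set (sub w p q) \<subseteq> Sig" using sig by (auto simp: sub_def)
    show "sub w p q \<noteq> []" by (fact vne)
    show "w = sub w 0 p \<frown> (sub w p q)\<^sup>\<omega>" by (fact wper)
    show "1 \<le> length vs" using vs(1) vne by (cases vs) auto
    show "sub w p q = concat vs" by (fact vs(1))
    show "\<forall>x\<in>set vs. x \<in> acc_A Sig s Fa dA (drun d q0 (sub w 0 p)) \<and>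
             drun d q0 (sub w 0 p @ x) = drun d q0 (sub w 0 p)"
      using vs(2) MU by (simp add: drun_app)
  qed
qed

end
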